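(* Let $M\subset\mathbb{C}P^2$ be a compact minimal Lagrangian surface. Then for every $q\in\mathbb{C}P^2$, $$\mathrm{dist}(q,M)\le \arccos\Bigl(\tfrac{1}{\sqrt3}\Bigr).$$
   Context: $\mathbb{C}P^2$ carries the Fubini–Study metric normalized so that the Hopf map $S^5\to\mathbb{C}P^2$ is a Riemannian submersion (holomorphic sectional curvature $4$, diameter $\pi/2$); $\mathrm{dist}$ is the Riemannian distance. *)

theory Defs
  imports "HOL-Analysis.Analysis"
begin

text \<open>A point of CP^2 is represented by any unit vector of C^3 lying over it;
  a subset M of CP^2 is represented by its full preimage in S^5 (a set of unit
  vectors closed under multiplication by unit complex scalars).\<close>

definition herm :: "complex^3 \<Rightarrow> complex^3 \<Rightarrow> complex" where
  "herm z w = (\<Sum>i\<in>UNIV. z$i * cnj (w$i))"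

definition S5 :: "(complex^3) set" where
  "S5 = sphere 0 1"

text \<open>Fubini--Study distance (holomorphic sectional curvature 4, diameter pi/2)
  between the points of CP^2 represented by unit vectors z and w.\<close>
definition fs_dist :: "complex^3 \<Rightarrow> complex^3 \<Rightarrow> real" where
  "fs_dist z w = arccos (cmod (herm z w))"

definition fs_setdist :: "complex^3 \<Rightarrow> (complex^3) set \<Rightarrow> real" where
  "fs_setdist q Mt = (INF w\<in>Mt. fs_dist q w)"

definition hopf_saturated :: "(complex^3) set \<Rightarrow> bool" where
  "hopf_saturated Mt \<longleftrightarrow> Mt \<subseteq> S5 \<and> (\<forall>z\<in>Mt. \<forall>c. cmod c = 1 \<longrightarrow> c *s z \<in> Mt)"

fun dd :: "(real \<times> real \<Rightarrow> 'b::real_normed_vector) \<Rightarrow> (real \<times> real) list \<Rightarrow> (real \<times> real \<Rightarrow> 'b)" where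
  "dd F [] = F"
| "dd F (h # hs) = (\<lambda>x. frechet_derivative (dd F hs) (at x) h)"

definition smooth_on :: "(real \<times> real) set \<Rightarrow> (real \<times> real \<Rightarrow> 'b::real_normed_vector) \<Rightarrow> bool" where
  "smooth_on U F \<longleftrightarrow> (\<forall>hs. \<forall>x\<in>U. dd F hs differentiable (at x))"

abbreviation e1 :: "real \<times> real" where "e1 \<equiv> (1, 0)"
abbreviation e2 :: "real \<times> real" where "e2 \<equiv> (0, 1)"

text \<open>F : U \<rightarrow> S^5 is a horizontal (Legendrian) lift of a smooth immersed surface in CP^2
  which is Lagrangian and minimal.  Since the Hopf map is a Riemannian submersion and
  F is horizontal, the induced metric is g_ij = <F_i,F_j>, and by O'Neill the mean
  curvature vector of the projected surface in CP^2 lifts to the component of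
  g^ij F_ij orthogonal to span_R {F, iF, F_u, F_v}.  The vector
  g22 F_uu - 2 g12 F_uv + g11 F_vv is (det g) g^ij F_ij.\<close>
definition min_lag_piece :: "(real \<times> real) set \<Rightarrow> (real \<times> real \<Rightarrow> complex^3) \<Rightarrow> bool" where
  "min_lag_piece U F \<longleftrightarrow>
     open U \<and> smooth_on U F \<and>
     (\<forall>x\<in>U.
        let Fu = dd F [e1] x; Fv = dd F [e2] x;
            Fuu = dd F [e1, e1] x; Fuv = dd F [e1, e2] x; Fvv = dd F [e2, e2] x;
            g11 = inner Fu Fu; g12 = inner Fu Fv; g22 = inner Fv Fv
        in F x \<in> S5
         \<and> (\<forall>a b. a *\<^sub>R Fu + b *\<^sub>R Fv = 0 \<longrightarrow> a = 0 \<and> b = 0)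
         \<and> herm Fu (F x) = 0 \<and> herm Fv (F x) = 0
         \<and> Im (herm Fu Fv) = 0
         \<and> g22 *\<^sub>R Fuu - (2 * g12) *\<^sub>R Fuv + g11 *\<^sub>R Fvv
              \<in> span {F x, \<i> *s F x, Fu, Fv})"

text \<open>Mt is the preimage in S^5 of a compact minimal Lagrangian surface of CP^2:
  compact, nonempty, Hopf-saturated, and near each of its points it coincides with
  the S^1-orbit of a smooth minimal Lagrangian immersed piece passing through the point
  (so the surface has no boundary).\<close>
definition compact_min_lag_surface :: "(complex^3) set \<Rightarrow> bool" where
  "compact_min_lag_surface Mt \<longleftrightarrow>
     Mt \<noteq> {} \<and> compact Mt \<and> hopf_saturated Mt \<and>
     (\<forall>p\<in>Mt. \<exists>V U F. open V \<and> p \<in> V \<and> min_lag_piece U F \<and>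
         p \<in> F ` U \<and> F ` U \<subseteq> Mt \<and>
         Mt \<inter> V \<subseteq> {c *s F x | c x. cmod c = 1 \<and> x \<in> U})"

end

theory Submission
  imports Defs
begin

definition J :: "complex^3 \<Rightarrow> complex^3" where "J z = \<i> *s z"

lemma inner_J_J[simp]: "inner (J a) (J b) = inner a b"
  by (simp add: J_def inner_vec_def inner_complex_def algebra_simps)
lemma inner_self_J[simp]: "inner a (J a) = 0"
  by (simp add: J_def inner_vec_def inner_complex_def algebra_simps)
lemma inner_J_self[simp]: "inner (J a) a = 0"
  by (simp add: J_def inner_vec_def inner_complex_def algebra_simps)
lemma inner_J_left: "inner (J a) b = - inner a (J b)"
  by (simp add: J_def inner_vec_def inner_complex_def algebra_simps sum_negf[symmetric])
lemma J_add[simp]: "J (a + b) = J a + J b" by (simp add: J_def vector_sadd_rdistrib vector_add_ldistrib)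
lemma J_diff[simp]: "J (a - b) = J a - J b" by (simp add: J_def vec_eq_iff algebra_simps)
lemma J_scaleR[simp]: "J (r *\<^sub>R a) = r *\<^sub>R J a" by (simp add: J_def vec_eq_iff)
lemma J_J[simp]: "J (J a) = - a" by (simp add: J_def vec_eq_iff)

lemma Re_herm: "Re (herm a b) = inner a b"
  by (simp add: herm_def inner_vec_def inner_complex_def)
lemma Im_herm: "Im (herm a b) = inner a (J b)"
  by (simp add: herm_def J_def inner_vec_def inner_complex_def algebra_simps)
lemma herm_commute: "herm b a = cnj (herm a b)"
  by (simp add: herm_def mult.commute)
lemma cmod_herm_sq: "(cmod (herm a b))^2 = (inner a b)^2 + (inner a (J b))^2"
  by (simp add: cmod_power2 Re_herm Im_herm)
lemma inner_self_norm1: "a \<in> S5 \<Longrightarrow> inner a a = 1"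
  by (simp add: S5_def dot_square_norm)


lemma parseval6:
  fixes e :: "nat \<Rightarrow> complex^3"
  assumes on: "\<And>i j. i < 6 \<Longrightarrow> j < 6 \<Longrightarrow> inner (e i) (e j) = (if i = j then 1 else 0)"
  shows "inner q q = (\<Sum>i<6. (inner q (e i))^2)"
proof -
  define r where "r = q - (\<Sum>i<6. inner q (e i) *\<^sub>R e i)"
  have rj: "inner r (e j) = 0" if "j < 6" for j
  proof -
    have "inner (\<Sum>i<6. inner q (e i) *\<^sub>R e i) (e j) = (\<Sum>i<6. inner q (e i) * inner (e i) (e j))"
      by (simp add: inner_sum_left)
    also have "\<dots> = (\<Sum>i<6. if i = j then inner q (e j) else 0)"
      using on that by (intro sum.cong) auto
    also have "\<dots> = inner q (e j)" using that by simp
    finally show ?thesis by (simp add: r_def inner_diff_left)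
  qed
  have r0: "r = 0"
  proof (rule ccontr)
    assume rnz: "r \<noteq> 0"
    define S where "S = insert r (e ` {..<6})"
    have inj: "inj_on e {..<6}"
    proof (rule inj_onI)
      fix i j assume "i \<in> {..<6::nat}" "j \<in> {..<6::nat}" "e i = e j"
      then show "i = j" using on[of i j] on[of i i] by (auto split: if_splits)
    qed
    have rn: "r \<notin> e ` {..<6}"
    proof
      assume "r \<in> e ` {..<6}"
      then obtain k where "k < 6" "r = e k" by auto
      then show False using rj[of k] on[of k k] by simp
    qed
    have cardS: "card S = 7"
      unfolding S_def using rn inj by (simp add: card_image)
    have "pairwise orthogonal S"
      unfolding S_def pairwise_def orthogonal_def
      using rj on by (auto simp: inner_commute)
    moreover have "0 \<notin> S"
      unfolding S_def using rnz on by (force)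
    ultimately have "independent S" by (rule pairwise_orthogonal_independent)
    then have "card S \<le> DIM(complex^3)" using independent_bound by blast
    then show False using cardS by simp
  qed
  have "inner q q = inner q (\<Sum>i<6. inner q (e i) *\<^sub>R e i)"
    using r0 unfolding r_def by (simp add: algebra_simps)
  also have "\<dots> = (\<Sum>i<6. (inner q (e i))^2)"
    by (simp add: inner_sum_right power2_eq_square)
  finally show ?thesis .
qed

lemma bessel2:
  fixes q u v :: "'a::real_inner"
  assumes "inner u u = 1" "inner v v = 1" "inner u v = 0"
  shows "(inner q u)^2 + (inner q v)^2 \<le> inner q q"
proof -
  have "0 \<le> inner (q - inner q u *\<^sub>R u - inner q v *\<^sub>R v) (q - inner q u *\<^sub>R u - inner q v *\<^sub>R v)"
    by simp
  also have "\<dots> = inner q q - (inner q u)^2 - (inner q v)^2"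
    using assms by (simp add: inner_diff_left inner_diff_right inner_commute power2_eq_square algebra_simps)
  finally show ?thesis by simp
qed


lemma line_deriv:
  fixes G :: "real\<times>real \<Rightarrow> 'b::real_inner"
  assumes "G differentiable (at (x + t *\<^sub>R h))"
  shows "((\<lambda>t. inner (G (x + t *\<^sub>R h)) v) has_real_derivative
            inner (frechet_derivative G (at (x + t *\<^sub>R h)) h) v) (at t)"
proof -
  let ?L = "frechet_derivative G (at (x + t *\<^sub>R h))"
  have dG: "(G has_derivative ?L) (at (x + t *\<^sub>R h))"
    using assms frechet_derivative_works by blast
  have bl: "bounded_linear ?L" using dG has_derivative_bounded_linear by blast
  have dl: "((\<lambda>t. x + t *\<^sub>R h) has_derivative (\<lambda>s. s *\<^sub>R h)) (at t)"
    by (auto intro!: derivative_eq_intros)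
  have "((\<lambda>t. G (x + t *\<^sub>R h)) has_derivative (\<lambda>s. ?L (s *\<^sub>R h))) (at t)"
    using has_derivative_compose[OF dl dG] by (simp add: o_def)
  then have "((\<lambda>t. inner (G (x + t *\<^sub>R h)) v) has_derivative (\<lambda>s. inner (?L (s *\<^sub>R h)) v)) (at t)"
    by (auto intro!: derivative_eq_intros)
  moreover have "(\<lambda>s. inner (?L (s *\<^sub>R h)) v) = (\<lambda>s. s * inner (?L h) v)"
    using bl by (simp add: linear_scale bounded_linear.linear)
  ultimately show ?thesis
    by (simp add: has_field_derivative_def mult.commute[of _ "inner _ v"])
qed

lemma fd_lin:
  assumes "G differentiable (at x)"
  shows "frechet_derivative G (at x) (a, b) = a *\<^sub>R frechet_derivative G (at x) (1,0) + b *\<^sub>R frechet_derivative G (at x) (0,1)"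
proof -
  have bl: "bounded_linear (frechet_derivative G (at x))"
    using assms frechet_derivative_works has_derivative_bounded_linear by blast
  have "(a, b) = a *\<^sub>R (1,0) + b *\<^sub>R ((0,1)::real\<times>real)" by simp
  then have "frechet_derivative G (at x) (a, b) = frechet_derivative G (at x) (a *\<^sub>R (1,0) + b *\<^sub>R (0,1))"
    by (rule arg_cong)
  also have "\<dots> = a *\<^sub>R frechet_derivative G (at x) (1,0) + b *\<^sub>R frechet_derivative G (at x) (0,1)"
    using bl by (simp only: linear_scale linear_add bounded_linear.linear)
  finally show ?thesis .
qed

lemma smooth_diff: "smooth_on U F \<Longrightarrow> x \<in> U \<Longrightarrow> dd F hs differentiable (at x)"
  by (simp add: smooth_on_def)

lemma dd_h:
  assumes "smooth_on U F" "x \<in> U"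
  shows "dd F [(a,b)] x = a *\<^sub>R dd F [e1] x + b *\<^sub>R dd F [e2] x"
  using fd_lin[OF smooth_diff[OF assms, of "[]"], of a b] by (simp only: dd.simps)

lemma dd_hh:
  assumes sm: "smooth_on U F" and U: "open U" and x: "x \<in> U"
  shows "dd F [(a,b),(a,b)] x = (a*a) *\<^sub>R dd F [e1,e1] x + (a*b) *\<^sub>R (dd F [e2,e1] x + dd F [e1,e2] x) + (b*b) *\<^sub>R dd F [e2,e2] x"
proof -
  let ?D1 = "frechet_derivative (dd F [e1]) (at x)"
  let ?D2 = "frechet_derivative (dd F [e2]) (at x)"
  have d1: "(dd F [e1] has_derivative ?D1) (at x)"
    using smooth_diff[OF sm x] frechet_derivative_works by blast
  have d2: "(dd F [e2] has_derivative ?D2) (at x)"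
    using smooth_diff[OF sm x] frechet_derivative_works by blast
  have "((\<lambda>y. a *\<^sub>R dd F [e1] y + b *\<^sub>R dd F [e2] y) has_derivative (\<lambda>k. a *\<^sub>R ?D1 k + b *\<^sub>R ?D2 k)) (at x)"
    by (rule has_derivative_add[OF has_derivative_scaleR_right[OF d1] has_derivative_scaleR_right[OF d2]])
  then have "(dd F [(a,b)] has_derivative (\<lambda>k. a *\<^sub>R ?D1 k + b *\<^sub>R ?D2 k)) (at x)"
    by (rule has_derivative_transform_within_open[OF _ U x]) (metis dd_h[OF sm])
  then have "frechet_derivative (dd F [(a,b)]) (at x) = (\<lambda>k. a *\<^sub>R ?D1 k + b *\<^sub>R ?D2 k)"
    by (rule frechet_derivative_at[symmetric])
  then have "dd F [(a,b),(a,b)] x = a *\<^sub>R ?D1 (a,b) + b *\<^sub>R ?D2 (a,b)" by (simp only: dd.simps)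
  also have "\<dots> = a *\<^sub>R (a *\<^sub>R dd F [e1,e1] x + b *\<^sub>R dd F [e2,e1] x) + b *\<^sub>R (a *\<^sub>R dd F [e1,e2] x + b *\<^sub>R dd F [e2,e2] x)"
    using fd_lin[OF smooth_diff[OF sm x, of "[e1]"], of a b] fd_lin[OF smooth_diff[OF sm x, of "[e2]"], of a b] by (simp only: dd.simps)
  also have "\<dots> = (a*a) *\<^sub>R dd F [e1,e1] x + (a*b) *\<^sub>R (dd F [e2,e1] x + dd F [e1,e2] x) + (b*b) *\<^sub>R dd F [e2,e2] x"
    by (simp add: algebra_simps)
  finally show ?thesis .
qed

lemma dd_inner_zero:
  fixes F G :: "real\<times>real \<Rightarrow> 'b::real_inner"
  assumes U: "open U" and x: "x \<in> U"
    and dG: "G differentiable (at x)" and dK: "K differentiable (at x)"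
    and z: "\<And>y. y \<in> U \<Longrightarrow> inner (G y) (K y) = 0"
  shows "inner (frechet_derivative G (at x) k) (K x) + inner (G x) (frechet_derivative K (at x) k) = 0"
proof -
  let ?A = "frechet_derivative G (at x)" and ?B = "frechet_derivative K (at x)"
  have "((\<lambda>y. inner (G y) (K y)) has_derivative (\<lambda>k. inner (G x) (?B k) + inner (?A k) (K x))) (at x)"
    using dG dK frechet_derivative_works by (auto intro!: derivative_eq_intros)
  moreover have "((\<lambda>y. inner (G y) (K y)) has_derivative (\<lambda>k. 0)) (at x)"
    by (rule has_derivative_transform_within_open[OF _ U x, of "\<lambda>y. 0"]) (auto simp: z)
  ultimately have "(\<lambda>k. inner (G x) (?B k) + inner (?A k) (K x)) = (\<lambda>k. 0)"
    by (rule has_derivative_unique)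
  then show ?thesis by (metis add.commute)
qed


lemma line_deriv_s:
  fixes f :: "real\<times>real \<Rightarrow> real"
  assumes dG: "(f has_derivative L) (at (c + t *\<^sub>R h))"
  shows "((\<lambda>t. f (c + t *\<^sub>R h)) has_real_derivative L h) (at t)"
proof -
  have bl: "bounded_linear L" using dG has_derivative_bounded_linear by blast
  have dl: "((\<lambda>t. c + t *\<^sub>R h) has_derivative (\<lambda>s. s *\<^sub>R h)) (at t)"
    by (auto intro!: derivative_eq_intros)
  have "((\<lambda>t. f (c + t *\<^sub>R h)) has_derivative (\<lambda>s. L (s *\<^sub>R h))) (at t)"
    using has_derivative_compose[OF dl dG] by (simp add: o_def)
  moreover have "(\<lambda>s. L (s *\<^sub>R h)) = (\<lambda>s. s * L h)"
    using bl by (simp add: linear_scale bounded_linear.linear)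
  ultimately show ?thesis
    by (simp add: has_field_derivative_def mult.commute[of _ "L h"])
qed

lemma sym_aux:
  fixes f :: "real\<times>real \<Rightarrow> real"
  assumes Df: "\<And>y. y \<in> U \<Longrightarrow> (f has_derivative Df y) (at y)"
    and blA: "bounded_linear Ah"
    and s: "0 < s" and e0: "0 \<le> e"
    and inU: "\<And>t. 0 \<le> t \<Longrightarrow> t \<le> s \<Longrightarrow> x + s *\<^sub>R k + t *\<^sub>R h \<in> U \<and> x + t *\<^sub>R h \<in> U"
    and est: "\<And>y. norm (y - x) \<le> s * (norm h + norm k) \<Longrightarrow>
                 \<bar>Df y h - Df x h - Ah (y - x)\<bar> \<le> e * norm (y - x)"
  shows "\<bar>f (x + s *\<^sub>R k + s *\<^sub>R h) - f (x + s *\<^sub>R h) - f (x + s *\<^sub>R k) + f x - s * s * Ah k\<bar>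
           \<le> 2 * e * s * s * (norm h + norm k)"
proof -
  define g where "g t = f (x + s *\<^sub>R k + t *\<^sub>R h) - f (x + t *\<^sub>R h)" for t
  define g' where "g' t = Df (x + s *\<^sub>R k + t *\<^sub>R h) h - Df (x + t *\<^sub>R h) h" for t
  have "DERIV g t :> g' t" if "0 \<le> t" "t \<le> s" for t
  proof -
    have a: "((\<lambda>t. f (x + s *\<^sub>R k + t *\<^sub>R h)) has_real_derivative Df (x + s *\<^sub>R k + t *\<^sub>R h) h) (at t)"
      using line_deriv_s Df inU that by blast
    have b: "((\<lambda>t. f (x + t *\<^sub>R h)) has_real_derivative Df (x + t *\<^sub>R h) h) (at t)"
      using line_deriv_s Df inU that by blast
    show ?thesis unfolding g_def g'_def using DERIV_diff[OF a b] by simp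
  qed
  then obtain z where z: "0 < z" "z < s" "g s - g 0 = (s - 0) * g' z"
    using MVT2[OF s, of g g'] by blast
  define y1 where "y1 = x + s *\<^sub>R k + z *\<^sub>R h"
  define y2 where "y2 = x + z *\<^sub>R h"
  have n1: "norm (y1 - x) \<le> s * (norm h + norm k)"
  proof -
    have "norm (y1 - x) \<le> norm (s *\<^sub>R k) + norm (z *\<^sub>R h)" unfolding y1_def
      using norm_triangle_ineq[of "s *\<^sub>R k" "z *\<^sub>R h"] by (simp add: algebra_simps)
    also have "\<dots> \<le> s * norm k + s * norm h" using z s
      by (simp add: mult_right_mono)
    finally show ?thesis by (simp add: algebra_simps)
  qed
  have n2: "norm (y2 - x) \<le> s * (norm h + norm k)"
  proof -
    have "norm (y2 - x) = z * norm h" unfolding y2_def using z by simp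
    also have "\<dots> \<le> s * norm h" using z by (simp add: mult_right_mono)
    moreover have "0 \<le> s * norm k" using s by simp
    ultimately show ?thesis by (simp add: algebra_simps)
  qed
  have lin: "Ah (y1 - x) - Ah (y2 - x) = s * Ah k"
  proof -
    have "y1 - x = (y2 - x) + s *\<^sub>R k" unfolding y1_def y2_def by (simp add: algebra_simps)
    then have "Ah (y1 - x) = Ah (y2 - x) + Ah (s *\<^sub>R k)"
      using blA by (simp only: linear_add bounded_linear.linear)
    then show ?thesis using blA by (simp add: linear_scale bounded_linear.linear)
  qed
  have "\<bar>g' z - s * Ah k\<bar> = \<bar>(Df y1 h - Df x h - Ah (y1 - x)) - (Df y2 h - Df x h - Ah (y2 - x))\<bar>"
    unfolding g'_def y1_def[symmetric] y2_def[symmetric] using lin by simp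
  also have "\<dots> \<le> e * norm (y1 - x) + e * norm (y2 - x)"
    using est[OF n1] est[OF n2] by linarith
  also have "\<dots> \<le> 2 * e * s * (norm h + norm k)"
    using mult_left_mono[OF n1 e0] mult_left_mono[OF n2 e0] by (simp add: algebra_simps)
  finally have gz: "\<bar>g' z - s * Ah k\<bar> \<le> 2 * e * s * (norm h + norm k)" .
  have "f (x + s *\<^sub>R k + s *\<^sub>R h) - f (x + s *\<^sub>R h) - f (x + s *\<^sub>R k) + f x - s * s * Ah k = s * (g' z - s * Ah k)"
    using z(3) unfolding g_def by (simp add: algebra_simps)
  also have "\<bar>\<dots>\<bar> \<le> s * (2 * e * s * (norm h + norm k))"
    using gz s by (simp add: abs_mult mult_left_mono)
  finally show ?thesis by (simp add: algebra_simps)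
qed

lemma sym_scalar:
  fixes f :: "real\<times>real \<Rightarrow> real"
  assumes U: "open U" and x: "x \<in> U"
    and Df: "\<And>y. y \<in> U \<Longrightarrow> (f has_derivative Df y) (at y)"
    and dh: "((\<lambda>y. Df y h) has_derivative Ah) (at x)"
    and dk: "((\<lambda>y. Df y k) has_derivative Ak) (at x)"
  shows "Ah k = Ak h"
proof (rule ccontr)
  assume ne: "Ah k \<noteq> Ak h"
  define d where "d = \<bar>Ah k - Ak h\<bar>"
  define M where "M = norm h + norm k + 1"
  have d0: "d > 0" using ne by (simp add: d_def)
  have M1: "M \<ge> 1" by (simp add: M_def)
  define e where "e = d / (8 * M)"
  have e0: "e > 0" using d0 M1 by (simp add: e_def)
  obtain blh: "bounded_linear Ah" and dh': "\<forall>e>0. \<exists>d>0. \<forall>y. norm (y - x) < d \<longrightarrow> norm (Df y h - Df x h - Ah (y - x)) \<le> e * norm (y - x)"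
    using dh unfolding has_derivative_at_alt by blast
  obtain blk: "bounded_linear Ak" and dk': "\<forall>e>0. \<exists>d>0. \<forall>y. norm (y - x) < d \<longrightarrow> norm (Df y k - Df x k - Ak (y - x)) \<le> e * norm (y - x)"
    using dk unfolding has_derivative_at_alt by blast
  obtain d1 where d1: "d1 > 0" "\<forall>y. norm (y - x) < d1 \<longrightarrow> norm (Df y h - Df x h - Ah (y - x)) \<le> e * norm (y - x)"
    using dh' e0 by blast
  obtain d2 where d2: "d2 > 0" "\<forall>y. norm (y - x) < d2 \<longrightarrow> norm (Df y k - Df x k - Ak (y - x)) \<le> e * norm (y - x)"
    using dk' e0 by blast
  obtain r where r: "r > 0" "ball x r \<subseteq> U" using U x open_contains_ball by blast
  define m where "m = min r (min d1 d2)"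
  have m0: "m > 0" using r d1 d2 by (simp add: m_def)
  define s where "s = m / (2 * M)"
  have s0: "s > 0" using m0 M1 by (simp add: s_def)
  have sM: "s * (norm h + norm k) < m"
  proof -
    have "s * (norm h + norm k) \<le> s * M" using s0 by (simp add: M_def)
    also have "\<dots> = m / 2" using M1 by (simp add: s_def)
    finally show ?thesis using m0 by simp
  qed
  have inU: "x + s *\<^sub>R a + t *\<^sub>R b \<in> U \<and> x + t *\<^sub>R b \<in> U"
    if "0 \<le> t" "t \<le> s" "norm a + norm b = norm h + norm k" for a b t
  proof -
    have "norm (s *\<^sub>R a + t *\<^sub>R b) \<le> s * norm a + t * norm b"
      using norm_triangle_ineq[of "s *\<^sub>R a" "t *\<^sub>R b"] s0 that by simp
    also have "\<dots> \<le> s * norm a + s * norm b" using that by (simp add: mult_right_mono)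
    also have "\<dots> < m" using sM that(3) by (metis distrib_left)
    finally have 1: "norm (s *\<^sub>R a + t *\<^sub>R b) < r" using m_def by simp
    have "norm (t *\<^sub>R b) \<le> s * norm b" using that by (simp add: mult_right_mono)
    also have "\<dots> \<le> s * norm a + s * norm b" using s0 by simp
    also have "\<dots> < m" using sM that(3) by (metis distrib_left)
    finally have 2: "norm (t *\<^sub>R b) < r" using m_def by simp
    have "x + s *\<^sub>R a + t *\<^sub>R b \<in> ball x r" 
    proof -
      have "x - (x + s *\<^sub>R a + t *\<^sub>R b) = - (s *\<^sub>R a + t *\<^sub>R b)" by simp
      then have "dist x (x + s *\<^sub>R a + t *\<^sub>R b) = norm (s *\<^sub>R a + t *\<^sub>R b)"
        by (metis dist_norm norm_minus_cancel)
      then show ?thesis using 1 by simp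
    qed
    moreover have "x + t *\<^sub>R b \<in> ball x r" using 2 by (simp add: dist_norm)
    ultimately show ?thesis using r(2) by blast
  qed
  have A1: "\<bar>f (x + s *\<^sub>R k + s *\<^sub>R h) - f (x + s *\<^sub>R h) - f (x + s *\<^sub>R k) + f x - s * s * Ah k\<bar>
           \<le> 2 * e * s * s * (norm h + norm k)"
  proof (rule sym_aux[OF Df blh s0 less_imp_le[OF e0]])
    show "x + s *\<^sub>R k + t *\<^sub>R h \<in> U \<and> x + t *\<^sub>R h \<in> U" if "0 \<le> t" "t \<le> s" for t
      using inU[of t k h] that by (simp add: add.commute)
    show "\<bar>Df y h - Df x h - Ah (y - x)\<bar> \<le> e * norm (y - x)" if "norm (y - x) \<le> s * (norm h + norm k)" for y
    proof -
      have "norm (y - x) < d1" using that sM unfolding m_def by linarith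
      then have "norm (Df y h - Df x h - Ah (y - x)) \<le> e * norm (y - x)" using d1(2) by blast
      then show ?thesis by simp
    qed
  qed auto
  have A2: "\<bar>f (x + s *\<^sub>R h + s *\<^sub>R k) - f (x + s *\<^sub>R k) - f (x + s *\<^sub>R h) + f x - s * s * Ak h\<bar>
           \<le> 2 * e * s * s * (norm k + norm h)"
  proof (rule sym_aux[OF Df blk s0 less_imp_le[OF e0]])
    show "x + s *\<^sub>R h + t *\<^sub>R k \<in> U \<and> x + t *\<^sub>R k \<in> U" if "0 \<le> t" "t \<le> s" for t
      using inU[of t h k] that by simp
    show "\<bar>Df y k - Df x k - Ak (y - x)\<bar> \<le> e * norm (y - x)" if "norm (y - x) \<le> s * (norm k + norm h)" for y
    proof -
      have "norm (y - x) < d2" using that sM unfolding m_def by (simp add: add.commute)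
      then have "norm (Df y k - Df x k - Ak (y - x)) \<le> e * norm (y - x)" using d2(2) by blast
      then show ?thesis by simp
    qed
  qed auto
  have "x + s *\<^sub>R h + s *\<^sub>R k = x + s *\<^sub>R k + s *\<^sub>R h" by (simp add: algebra_simps)
  then have "\<bar>s * s * Ah k - s * s * Ak h\<bar> \<le> 4 * e * s * s * (norm h + norm k)"
    using A1 A2 by (simp add: algebra_simps)
  moreover have "\<bar>s * s * Ah k - s * s * Ak h\<bar> = s * s * d"
  proof -
    have "s * s * Ah k - s * s * Ak h = (s * s) * (Ah k - Ak h)" by (simp add: right_diff_distrib)
    then show ?thesis unfolding d_def by (simp add: abs_mult)
  qed
  ultimately have "s * s * d \<le> s * s * (4 * e * (norm h + norm k))"
    by (simp add: mult_ac)
  then have "d \<le> 4 * e * (norm h + norm k)" using s0 by simp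
  also have "\<dots> < 4 * e * M" using e0 by (simp add: M_def)
  also have "\<dots> = d / 2" using M1 by (simp add: e_def)
  finally show False using d0 by simp
qed


lemma dd_sym:
  fixes F :: "real\<times>real \<Rightarrow> 'b::real_inner"
  assumes sm: "smooth_on U F" and U: "open U" and x: "x \<in> U"
  shows "dd F [k,h] x = dd F [h,k] x"
proof -
  have *: "inner (dd F [k,h] x) v = inner (dd F [h,k] x) v" for v
  proof -
    define f where "f y = inner (F y) v" for y
    define Df where "Df y = (\<lambda>k. inner (frechet_derivative F (at y) k) v)" for y
    have df: "(f has_derivative Df y) (at y)" if "y \<in> U" for y
    proof -
      have "F differentiable (at y)" using smooth_diff[OF sm that, of "[]"] by simp
      then have "(F has_derivative frechet_derivative F (at y)) (at y)"
        using frechet_derivative_works by blast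
      then show ?thesis unfolding f_def Df_def by (auto intro!: derivative_eq_intros)
    qed
    have dg: "((\<lambda>y. Df y h') has_derivative (\<lambda>k. inner (dd F [k,h'] x) v)) (at x)" for h'
    proof -
      have "(dd F [h'] has_derivative frechet_derivative (dd F [h']) (at x)) (at x)"
        using smooth_diff[OF sm x, of "[h']"] frechet_derivative_works by blast
      then have "((\<lambda>y. inner (dd F [h'] y) v) has_derivative (\<lambda>k. inner (frechet_derivative (dd F [h']) (at x) k) v)) (at x)"
        by (auto intro!: derivative_eq_intros)
      then show ?thesis unfolding Df_def by simp
    qed
    show ?thesis using sym_scalar[OF U x df dg[of h] dg[of k]] by simp
  qed
  have "inner (dd F [k,h] x - dd F [h,k] x) (dd F [k,h] x - dd F [h,k] x) = 0"
    using *[of "dd F [k,h] x - dd F [h,k] x"] by (simp add: inner_diff_left)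
  then show ?thesis by simp
qed

lemma max2:
  fixes p1 p2 p1' p2' :: "real \<Rightarrow> real"
  assumes d: "d > 0"
    and D1: "\<And>t. \<bar>t\<bar> < d \<Longrightarrow> DERIV p1 t :> p1' t"
    and D2: "\<And>t. \<bar>t\<bar> < d \<Longrightarrow> DERIV p2 t :> p2' t"
    and E1: "DERIV p1' 0 :> a1" and E2: "DERIV p2' 0 :> a2"
    and mx: "\<And>t. \<bar>t\<bar> < d \<Longrightarrow> (p1 t)^2 + (p2 t)^2 \<le> (p1 0)^2 + (p2 0)^2"
  shows "p1 0 * p1' 0 + p2 0 * p2' 0 = 0"
    and "p1 0 * a1 + (p1' 0)^2 + p2 0 * a2 + (p2' 0)^2 \<le> 0"
proof -
  define g where "g t = (p1 t)^2 + (p2 t)^2" for t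
  define g' where "g' t = 2 * (p1 t * p1' t + p2 t * p2' t)" for t
  have Dg: "DERIV g t :> g' t" if "\<bar>t\<bar> < d" for t
    unfolding g_def g'_def
    by (rule derivative_eq_intros D1 D2 that refl | simp add: algebra_simps)+
  have g'0: "g' 0 = 0"
    by (rule DERIV_local_max[OF Dg d]) (use d mx in \<open>auto simp: g_def\<close>)
  then show "p1 0 * p1' 0 + p2 0 * p2' 0 = 0" by (simp add: g'_def)
  have D10: "DERIV p1 0 :> p1' 0" using D1 d by simp
  have D20: "DERIV p2 0 :> p2' 0" using D2 d by simp
  have Dg': "DERIV g' 0 :> 2 * (p1' 0 * p1' 0 + p1 0 * a1 + (p2' 0 * p2' 0 + p2 0 * a2))"
    unfolding g'_def
    using DERIV_cmult[OF DERIV_add[OF DERIV_mult[OF D10 E1] DERIV_mult[OF D20 E2]], of 2] by (simp add: mult.commute)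
  show "p1 0 * a1 + (p1' 0)^2 + p2 0 * a2 + (p2' 0)^2 \<le> 0"
  proof (rule ccontr)
    assume "\<not> ?thesis"
    then have pos: "0 < 2 * (p1' 0 * p1' 0 + p1 0 * a1 + (p2' 0 * p2' 0 + p2 0 * a2))"
      by (simp add: power2_eq_square algebra_simps)
    obtain e where e: "e > 0" "\<And>h. h > 0 \<Longrightarrow> h < e \<Longrightarrow> g' 0 < g' (0 + h)"
      using DERIV_pos_inc_right[OF Dg' pos] by blast
    define t where "t = min e d / 2"
    have t: "0 < t" "t < e" "t < d" using e d by (auto simp: t_def)
    obtain z where z: "0 < z" "z < t" "g t - g 0 = (t - 0) * g' z"
      using MVT2[OF t(1), of g g'] Dg t by force
    have "g' z > 0" using e(2)[of z] z t g'0 by simp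
    then have "t * g' z > 0" using t by simp
    then have "g t > g 0" using z by simp
    moreover have "g t \<le> g 0" using mx[of t] t by (simp add: g_def)
    ultimately show False by simp
  qed
qed


lemma line_max:
  fixes F :: "real\<times>real \<Rightarrow> complex^3"
  assumes sm: "smooth_on U F" and U: "open U" and x: "x0 \<in> U"
    and mx: "\<And>y. y \<in> U \<Longrightarrow> (inner (F y) q1)^2 + (inner (F y) q2)^2 \<le> (inner (F x0) q1)^2 + (inner (F x0) q2)^2"
  shows "inner (F x0) q1 * inner (dd F [h] x0) q1 + inner (F x0) q2 * inner (dd F [h] x0) q2 = 0"
    and "inner (F x0) q1 * inner (dd F [h,h] x0) q1 + (inner (dd F [h] x0) q1)^2
       + inner (F x0) q2 * inner (dd F [h,h] x0) q2 + (inner (dd F [h] x0) q2)^2 \<le> 0"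
proof -
  obtain r where r: "r > 0" "ball x0 r \<subseteq> U" using U x open_contains_ball by blast
  define d where "d = r / (norm h + 1)"
  have n1: "norm h + 1 > 0" by (simp add: add_nonneg_pos)
  have d0: "d > 0" using r n1 by (simp add: d_def)
  have inU: "x0 + t *\<^sub>R h \<in> U" if "\<bar>t\<bar> < d" for t
  proof -
    have "norm (t *\<^sub>R h) = \<bar>t\<bar> * norm h" by simp
    also have "\<dots> \<le> \<bar>t\<bar> * (norm h + 1)" by (simp add: mult_left_mono)
    also have "\<dots> < d * (norm h + 1)" using that n1 by (simp add: mult_strict_right_mono)
    also have "\<dots> = r" using n1 by (simp add: d_def)
    finally have "norm (t *\<^sub>R h) < r" .
    then have "x0 + t *\<^sub>R h \<in> ball x0 r" by (simp add: dist_norm)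
    then show ?thesis using r by blast
  qed
  define p1 where "p1 t = inner (F (x0 + t *\<^sub>R h)) q1" for t
  define p2 where "p2 t = inner (F (x0 + t *\<^sub>R h)) q2" for t
  define p1' where "p1' t = inner (dd F [h] (x0 + t *\<^sub>R h)) q1" for t
  define p2' where "p2' t = inner (dd F [h] (x0 + t *\<^sub>R h)) q2" for t
  have Dp: "DERIV (\<lambda>t. inner (F (x0 + t *\<^sub>R h)) v) t :> inner (dd F [h] (x0 + t *\<^sub>R h)) v"
    if "\<bar>t\<bar> < d" for t v
  proof -
    have "F differentiable (at (x0 + t *\<^sub>R h))" using smooth_diff[OF sm inU[OF that], of "[]"] by simp
    from line_deriv[OF this] show ?thesis by simp
  qed
  have Dp': "DERIV (\<lambda>t. inner (dd F [h] (x0 + t *\<^sub>R h)) v) 0 :> inner (dd F [h,h] x0) v" for v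
  proof -
    have "dd F [h] differentiable (at (x0 + 0 *\<^sub>R h))" using smooth_diff[OF sm x, of "[h]"] by simp
    from line_deriv[OF this, of v] show ?thesis by simp
  qed
  have m: "(p1 t)^2 + (p2 t)^2 \<le> (p1 0)^2 + (p2 0)^2" if "\<bar>t\<bar> < d" for t
    using mx[OF inU[OF that]] by (simp add: p1_def p2_def)
  note M = max2[OF d0, of p1 p1' p2 p2', OF Dp[of _ q1, folded p1_def p1'_def] Dp[of _ q2, folded p2_def p2'_def]
      Dp'[of q1, folded p1'_def] Dp'[of q2, folded p2'_def] m]
  from M(1) show "inner (F x0) q1 * inner (dd F [h] x0) q1 + inner (F x0) q2 * inner (dd F [h] x0) q2 = 0"
    by (simp add: p1_def p2_def p1'_def p2'_def)
  from M(2) show "inner (F x0) q1 * inner (dd F [h,h] x0) q1 + (inner (dd F [h] x0) q1)^2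
       + inner (F x0) q2 * inner (dd F [h,h] x0) q2 + (inner (dd F [h] x0) q2)^2 \<le> 0"
    by (simp add: p1_def p2_def p1'_def p2'_def)
qed


lemma J_swap: "inner a (J b) = - inner b (J a)"
  by (metis inner_J_left inner_commute)

lemma parseval_J:
  assumes o: "inner b1 b1 = 1" "inner b2 b2 = 1" "inner b3 b3 = 1" "inner b1 b2 = 0" "inner b1 b3 = 0"
    "inner b2 b3 = 0" "inner b1 (J b2) = 0" "inner b1 (J b3) = 0" "inner b2 (J b3) = 0"
  shows "inner q q = (inner q b1)^2 + (inner q (J b1))^2 + (inner q b2)^2 + (inner q (J b2))^2
                     + (inner q b3)^2 + (inner q (J b3))^2"
proof -
  define e where "e i = [b1, J b1, b2, J b2, b3, J b3] ! i" for i
  have o2: "inner b2 (J b1) = 0" "inner b3 (J b1) = 0" "inner b3 (J b2) = 0"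
    using o J_swap by (metis neg_equal_0_iff_equal)+
  have o3: "inner b2 b1 = 0" "inner b3 b1 = 0" "inner b3 b2 = 0"
    using o inner_commute by metis+
  have o4: "inner (J a) b = - inner a (J b)" for a b by (rule inner_J_left)
  have "inner (e i) (e j) = (if i = j then 1 else 0)" if "i < 6" "j < 6" for i j
  proof -
    have "i \<in> {0,1,2,3,4,5}" "j \<in> {0,1,2,3,4,5}" using that by auto
    then show ?thesis using o o2 o3 by (auto simp: e_def o4)
  qed
  from parseval6[OF this] show ?thesis
    by (simp add: eval_nat_numeral e_def)
qed


declare dd.simps(2)[simp del]

lemma core:
  fixes F :: "real\<times>real \<Rightarrow> complex^3"
  assumes piece: "min_lag_piece U F" and x: "x0 \<in> U" and q: "q \<in> S5"
    and mx: "\<And>y. y \<in> U \<Longrightarrow> cmod (herm q (F y)) \<le> cmod (herm q (F x0))"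
  shows "1/3 \<le> (cmod (herm q (F x0)))^2"
proof -
  have U: "open U" and sm: "smooth_on U F" using piece by (simp_all add: min_lag_piece_def)
  have P: "F y \<in> S5 \<and> herm (dd F [e1] y) (F y) = 0 \<and> herm (dd F [e2] y) (F y) = 0" if "y \<in> U" for y
    using piece that unfolding min_lag_piece_def Let_def by blast
  have L: "F x0 \<in> S5 \<and> (\<forall>a b. a *\<^sub>R dd F [e1] x0 + b *\<^sub>R dd F [e2] x0 = 0 \<longrightarrow> a = 0 \<and> b = 0)
     \<and> herm (dd F [e1] x0) (F x0) = 0 \<and> herm (dd F [e2] x0) (F x0) = 0
     \<and> Im (herm (dd F [e1] x0) (dd F [e2] x0)) = 0
     \<and> (inner (dd F [e2] x0) (dd F [e2] x0)) *\<^sub>R dd F [e1, e1] x0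
        - (2 * inner (dd F [e1] x0) (dd F [e2] x0)) *\<^sub>R dd F [e1, e2] x0
        + (inner (dd F [e1] x0) (dd F [e1] x0)) *\<^sub>R dd F [e2, e2] x0
        \<in> span {F x0, \<i> *s F x0, dd F [e1] x0, dd F [e2] x0}"
    using piece x unfolding min_lag_piece_def Let_def by blast
  define F0 where "F0 = F x0"
  define Fu where "Fu = dd F [e1] x0"
  define Fv where "Fv = dd F [e2] x0"
  define Fuu where "Fuu = dd F [e1,e1] x0"
  define Fuv where "Fuv = dd F [e1,e2] x0"
  define Fvv where "Fvv = dd F [e2,e2] x0"
  define g11 where "g11 = inner Fu Fu"
  define g12 where "g12 = inner Fu Fv"
  define g22 where "g22 = inner Fv Fv"
  define det where "det = g11 * g22 - g12^2"
  define H where "H = g22 *\<^sub>R Fuu - (2 * g12) *\<^sub>R Fuv + g11 *\<^sub>R Fvv"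
  have indep: "\<And>a b. a *\<^sub>R Fu + b *\<^sub>R Fv = 0 \<Longrightarrow> a = 0 \<and> b = 0"
    using L unfolding Fu_def Fv_def by blast
  have f00: "inner F0 F0 = 1" using L inner_self_norm1 unfolding F0_def by blast
  have oFu: "inner Fu F0 = 0" "inner Fu (J F0) = 0"
    using L unfolding Fu_def F0_def by (metis Re_herm Im_herm zero_complex.sel)+
  have oFv: "inner Fv F0 = 0" "inner Fv (J F0) = 0"
    using L unfolding Fv_def F0_def by (metis Re_herm Im_herm zero_complex.sel)+
  have oJ: "inner Fu (J Fv) = 0"
    using L unfolding Fu_def Fv_def by (metis Im_herm)
  have Hspan: "H \<in> span {F0, J F0, Fu, Fv}"
    using L unfolding H_def F0_def Fu_def Fv_def Fuu_def Fuv_def Fvv_def g11_def g12_def g22_def J_def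
    by blast
  have dU: "\<And>y hs. y \<in> U \<Longrightarrow> dd F hs differentiable (at y)" using smooth_diff[OF sm] by blast
  have dF: "F differentiable (at x0)" using dU[OF x, of "[]"] by simp
  have z1: "inner (dd F [e1] y) (F y) = 0" if "y \<in> U" for y using P[OF that] by (metis Re_herm zero_complex.sel)
  have z2: "inner (dd F [e2] y) (F y) = 0" if "y \<in> U" for y using P[OF that] by (metis Re_herm zero_complex.sel)
  have I1: "inner Fuu F0 = - g11"
    using dd_inner_zero[OF U x dU[OF x, of "[e1]"] dF z1, of e1]
    unfolding Fuu_def F0_def g11_def Fu_def by (simp add: dd.simps)
  have I2: "inner Fuv F0 = - g12"
    using dd_inner_zero[OF U x dU[OF x, of "[e2]"] dF z2, of e1]
    unfolding Fuv_def F0_def g12_def Fu_def Fv_def by (simp add: dd.simps inner_commute)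
  have I3: "inner Fvv F0 = - g22"
    using dd_inner_zero[OF U x dU[OF x, of "[e2]"] dF z2, of e2]
    unfolding Fvv_def F0_def g22_def Fv_def by (simp add: dd.simps)
  obtain \<alpha> \<beta> \<gamma> \<delta> where Hrep: "H = \<alpha> *\<^sub>R F0 + \<beta> *\<^sub>R J F0 + \<gamma> *\<^sub>R Fu + \<delta> *\<^sub>R Fv"
  proof -
    from Hspan obtain k1 where "H - k1 *\<^sub>R F0 \<in> span {J F0, Fu, Fv}" using span_breakdown_eq by blast
    then obtain k2 where "H - k1 *\<^sub>R F0 - k2 *\<^sub>R J F0 \<in> span {Fu, Fv}" using span_breakdown_eq by blast
    then obtain k3 where "H - k1 *\<^sub>R F0 - k2 *\<^sub>R J F0 - k3 *\<^sub>R Fu \<in> span {Fv}" using span_breakdown_eq by blast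
    then obtain k4 where "H - k1 *\<^sub>R F0 - k2 *\<^sub>R J F0 - k3 *\<^sub>R Fu - k4 *\<^sub>R Fv \<in> span {}" using span_breakdown_eq by blast
    then have "H = k1 *\<^sub>R F0 + k2 *\<^sub>R J F0 + k3 *\<^sub>R Fu + k4 *\<^sub>R Fv" by (simp add: algebra_simps)
    then show ?thesis using that by blast
  qed
  have alpha: "\<alpha> = -2 * det"
  proof -
    have "inner H F0 = \<alpha>" using Hrep f00 oFu oFv by (simp add: inner_add_left)
    moreover have "inner H F0 = -2 * det"
      unfolding H_def det_def using I1 I2 I3 by (simp add: inner_add_left inner_diff_left power2_eq_square algebra_simps)
    ultimately show ?thesis by simp
  qed
  have g22p: "g22 > 0"
  proof -
    have "Fv \<noteq> 0" using indep[of 0 1] by auto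
    then show ?thesis unfolding g22_def by simp
  qed
  have detp: "det > 0"
  proof -
    define v where "v = g22 *\<^sub>R Fu - g12 *\<^sub>R Fv"
    have "v \<noteq> 0" using indep[of g22 "- g12"] g22p unfolding v_def by auto
    then have "inner v v > 0" by simp
    moreover have "inner v v = g22 * det"
      unfolding v_def det_def g11_def g12_def g22_def
      by (simp add: inner_diff_left inner_diff_right inner_commute power2_eq_square algebra_simps)
    ultimately show ?thesis using g22p by (simp add: zero_less_mult_iff)
  qed
  define q2 where "q2 = J q"
  have mx2: "(inner (F y) q)^2 + (inner (F y) q2)^2 \<le> (inner (F x0) q)^2 + (inner (F x0) q2)^2"
    if "y \<in> U" for y
  proof -
    have e: "(cmod (herm q z))^2 = (inner z q)^2 + (inner z q2)^2" for z
      unfolding cmod_herm_sq q2_def using J_swap[of q z] by (simp add: inner_commute)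
    have "(cmod (herm q (F y)))^2 \<le> (cmod (herm q (F x0)))^2"
      using mx[OF that] by (simp add: power_mono)
    then show ?thesis unfolding e .
  qed
  note LM = line_max[OF sm U x mx2]
  define c1 where "c1 = inner F0 q"
  define c2 where "c2 = inner F0 q2"
  have FOu: "c1 * inner Fu q + c2 * inner Fu q2 = 0"
    using LM(1)[of e1] unfolding c1_def c2_def F0_def Fu_def .
  have FOv: "c1 * inner Fv q + c2 * inner Fv q2 = 0"
    using LM(1)[of e2] unfolding c1_def c2_def F0_def Fv_def .
  have sym: "dd F [e2,e1] x0 = Fuv" unfolding Fuv_def by (rule dd_sym[OF sm U x])
  have SO: "c1 * inner ((a*a) *\<^sub>R Fuu + (a*b) *\<^sub>R (Fuv + Fuv) + (b*b) *\<^sub>R Fvv) q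
          + c2 * inner ((a*a) *\<^sub>R Fuu + (a*b) *\<^sub>R (Fuv + Fuv) + (b*b) *\<^sub>R Fvv) q2
          + (inner (a *\<^sub>R Fu + b *\<^sub>R Fv) q)^2 + (inner (a *\<^sub>R Fu + b *\<^sub>R Fv) q2)^2 \<le> 0" for a b
  proof -
    have "dd F [(a,b),(a,b)] x0 = (a*a) *\<^sub>R Fuu + (a*b) *\<^sub>R (Fuv + Fuv) + (b*b) *\<^sub>R Fvv"
      using dd_hh[OF sm U x, of a b] sym unfolding Fuu_def Fuv_def Fvv_def by simp
    moreover have "dd F [(a,b)] x0 = a *\<^sub>R Fu + b *\<^sub>R Fv"
      using dd_h[OF sm x, of a b] unfolding Fu_def Fv_def .
    ultimately show ?thesis using LM(2)[of "(a,b)"] unfolding c1_def c2_def F0_def by simp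
  qed
  define a1 where "a1 = sqrt g22"
  define b1 where "b1 = - g12 / sqrt g22"
  define b2 where "b2 = sqrt (det / g22)"
  have a1a1: "a1 * a1 = g22" using g22p unfolding a1_def by simp
  have a1b1: "a1 * b1 = - g12" using g22p unfolding a1_def b1_def by simp
  have b1b1: "b1 * b1 = g12^2 / g22" using g22p unfolding b1_def by (simp add: power2_eq_square)
  have b2b2: "b2 * b2 = det / g22" using g22p detp unfolding b2_def by simp
  have bb: "b1 * b1 + b2 * b2 = g11"
  proof -
    have "b1 * b1 + b2 * b2 = (g12^2 + det) / g22" using b1b1 b2b2 by (simp add: add_divide_distrib)
    also have "\<dots> = g11" using g22p unfolding det_def by (simp add: field_simps)
    finally show ?thesis .
  qed
  define V where "V a b = (a*a) *\<^sub>R Fuu + (a*b) *\<^sub>R (Fuv + Fuv) + (b*b) *\<^sub>R Fvv" for a b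
  have VH: "V a1 b1 + V 0 b2 = H"
  proof -
    have "V a1 b1 + V 0 b2 = (a1*a1) *\<^sub>R Fuu + (2 * (a1*b1)) *\<^sub>R Fuv + (b1*b1 + b2*b2) *\<^sub>R Fvv"
      unfolding V_def by (simp add: scaleR_2[symmetric] scaleR_add_left mult_ac add_ac)
    then show ?thesis unfolding H_def using a1a1 a1b1 bb by simp
  qed
  define w1 where "w1 = a1 *\<^sub>R Fu + b1 *\<^sub>R Fv"
  define w2 where "w2 = b2 *\<^sub>R Fv"
  define N where "N w = (inner w q)^2 + (inner w q2)^2" for w
  have S: "c1 * inner H q + c2 * inner H q2 + N w1 + N w2 \<le> 0"
  proof -
    have s1: "c1 * inner (V a1 b1) q + c2 * inner (V a1 b1) q2 + N w1 \<le> 0"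
      using SO[of a1 b1] unfolding V_def N_def w1_def by simp
    have s2: "c1 * inner (V 0 b2) q + c2 * inner (V 0 b2) q2 + N w2 \<le> 0"
      using SO[of 0 b2] unfolding V_def N_def w2_def by simp
    show ?thesis using s1 s2 unfolding VH[symmetric] by (simp add: inner_add_left algebra_simps)
  qed
  have LH: "c1 * inner H q + c2 * inner H q2 = \<alpha> * (c1^2 + c2^2)"
  proof -
    have j1: "inner (J F0) q = - c2" unfolding c2_def q2_def by (rule inner_J_left)
    have j2: "inner (J F0) q2 = c1" unfolding c1_def q2_def by simp
    have "c1 * inner H q + c2 * inner H q2 = \<alpha> * (c1 * inner F0 q + c2 * inner F0 q2)
        + \<beta> * (c1 * inner (J F0) q + c2 * inner (J F0) q2)
        + \<gamma> * (c1 * inner Fu q + c2 * inner Fu q2) + \<delta> * (c1 * inner Fv q + c2 * inner Fv q2)"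
      unfolding Hrep by (simp add: inner_add_left algebra_simps)
    also have "\<dots> = \<alpha> * (c1^2 + c2^2)"
      using FOu FOv j1 j2 unfolding c1_def c2_def by (simp add: power2_eq_square algebra_simps)
    finally show ?thesis .
  qed
  have ww1: "inner w1 w1 = det"
  proof -
    have "inner w1 w1 = (a1*a1) * g11 + 2 * (a1*b1) * g12 + (b1*b1) * g22"
      unfolding w1_def g11_def g12_def g22_def
      by (simp add: inner_add_left inner_add_right inner_commute algebra_simps)
    also have "\<dots> = det" using a1a1 a1b1 b1b1 g22p unfolding det_def by (simp add: power2_eq_square)
    finally show ?thesis .
  qed
  have ww2: "inner w2 w2 = det"
  proof -
    have "inner w2 w2 = (b2 * b2) * g22" unfolding w2_def g22_def by simp
    then show ?thesis using b2b2 g22p by simp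
  qed
  have b1g: "b1 * g22 = - g12 * a1"
  proof -
    have "a1 * a1 * b1 = - g12 * a1" using a1b1 by (metis mult.assoc mult.commute)
    then show ?thesis using a1a1 by (simp add: mult.commute)
  qed
  have ww12: "inner w1 w2 = 0"
  proof -
    have "inner w1 w2 = b2 * (a1 * g12 + b1 * g22)"
      unfolding w1_def w2_def g12_def g22_def by (simp add: inner_add_left algebra_simps)
    then show ?thesis using b1g by simp
  qed
  have JFu: "inner F0 (J Fu) = 0" using oFu J_swap[of F0 Fu] by simp
  have JFv: "inner F0 (J Fv) = 0" using oFv J_swap[of F0 Fv] by simp
  have JFuv: "inner Fv (J Fu) = 0" using oJ J_swap[of Fv Fu] by simp
  have Fw1: "inner F0 w1 = 0" "inner F0 (J w1) = 0"
    unfolding w1_def using oFu oFv JFu JFv by (simp_all add: inner_add_right inner_commute)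
  have Fw2: "inner F0 w2 = 0" "inner F0 (J w2) = 0"
    unfolding w2_def using oFu oFv JFu JFv by (simp_all add: inner_add_right inner_commute)
  have w12J: "inner w1 (J w2) = 0"
    unfolding w1_def w2_def using oJ by (simp add: inner_add_left)
  define c where "c = 1 / sqrt det"
  have cc: "c * c * det = 1" using detp unfolding c_def by simp
  define u1 where "u1 = c *\<^sub>R w1"
  define u2 where "u2 = c *\<^sub>R w2"
  have PJ: "inner q q = (inner q F0)^2 + (inner q (J F0))^2 + (inner q u1)^2 + (inner q (J u1))^2
                     + (inner q u2)^2 + (inner q (J u2))^2"
  proof (rule parseval_J)
    show "inner F0 F0 = 1" by (rule f00)
    show "inner u1 u1 = 1" unfolding u1_def using ww1 cc by (simp add: mult.assoc)
    show "inner u2 u2 = 1" unfolding u2_def using ww2 cc by (simp add: mult.assoc)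
    show "inner F0 u1 = 0" unfolding u1_def using Fw1 by simp
    show "inner F0 u2 = 0" unfolding u2_def using Fw2 by simp
    show "inner u1 u2 = 0" unfolding u1_def u2_def using ww12 by simp
    show "inner F0 (J u1) = 0" unfolding u1_def using Fw1 by simp
    show "inner F0 (J u2) = 0" unfolding u2_def using Fw2 by simp
    show "inner u1 (J u2) = 0" unfolding u1_def u2_def using w12J by simp
  qed
  have qq: "inner q q = 1" using q inner_self_norm1 by blast
  have Nq: "(inner q w)^2 + (inner q (J w))^2 = N w" for w
    unfolding N_def q2_def using J_swap[of q w] by (simp add: inner_commute)
  have fq: "(inner q F0)^2 + (inner q (J F0))^2 = c1^2 + c2^2"
    unfolding c1_def c2_def q2_def using J_swap[of q F0] by (simp add: inner_commute)
  have "1 = c1^2 + c2^2 + c * c * (N w1 + N w2)"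
  proof -
    have "(inner q u1)^2 + (inner q (J u1))^2 = c * c * N w1"
      unfolding u1_def Nq[symmetric] by (simp add: power2_eq_square algebra_simps)
    moreover have "(inner q u2)^2 + (inner q (J u2))^2 = c * c * N w2"
      unfolding u2_def Nq[symmetric] by (simp add: power2_eq_square algebra_simps)
    ultimately show ?thesis using PJ qq fq by (simp add: algebra_simps)
  qed
  then have NN: "N w1 + N w2 = det * (1 - (c1^2 + c2^2))"
    using cc detp by (metis (no_types, lifting) add_diff_cancel_left' mult.commute mult.left_neutral mult.assoc)
  have "det * (1 - 3 * (c1^2 + c2^2)) \<le> 0"
    using S LH alpha NN by (simp add: algebra_simps)
  then have "1 \<le> 3 * (c1^2 + c2^2)" using detp by (simp add: mult_le_0_iff)
  moreover have "(cmod (herm q (F x0)))^2 = c1^2 + c2^2"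
    using fq unfolding cmod_herm_sq F0_def .
  ultimately show ?thesis by simp
qed

lemma herm_le1:
  assumes "q \<in> S5" "w \<in> S5"
  shows "cmod (herm q w) \<le> 1"
proof -
  have "(cmod (herm q w))^2 \<le> inner q q"
    unfolding cmod_herm_sq
    by (rule bessel2) (use assms inner_self_norm1 in auto)
  then have "(cmod (herm q w))^2 \<le> 1^2" using assms(1) inner_self_norm1 by simp
  then show ?thesis by (rule power2_le_imp_le) simp
qed

theorem theorem7p2:
  fixes Mt :: "(complex^3) set" and q :: "complex^3"
  assumes "compact_min_lag_surface Mt"
    and "q \<in> S5"
  shows "fs_setdist q Mt \<le> arccos (1 / sqrt 3)"
proof -
  have ne: "Mt \<noteq> {}" and cpt: "compact Mt" and sat: "hopf_saturated Mt"
    and loc: "\<forall>p\<in>Mt. \<exists>V U F. open V \<and> p \<in> V \<and> min_lag_piece U F \<and>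
         p \<in> F ` U \<and> F ` U \<subseteq> Mt \<and>
         Mt \<inter> V \<subseteq> {c *s F x | c x. cmod c = 1 \<and> x \<in> U}"
    using assms(1) unfolding compact_min_lag_surface_def by blast+
  have MS: "Mt \<subseteq> S5" using sat unfolding hopf_saturated_def by blast
  have cont: "continuous_on Mt (\<lambda>w. cmod (herm q w))"
    unfolding herm_def by (intro continuous_intros)
  obtain p where p: "p \<in> Mt" "\<And>y. y \<in> Mt \<Longrightarrow> cmod (herm q y) \<le> cmod (herm q p)"
    using continuous_attains_sup[OF cpt ne cont] by blast
  obtain U F where UF: "min_lag_piece U F" "p \<in> F ` U" "F ` U \<subseteq> Mt"
    using loc p(1) by blast
  obtain x0 where x0: "x0 \<in> U" "p = F x0" using UF(2) by blast
  have "1/3 \<le> (cmod (herm q (F x0)))^2"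
    by (rule core[OF UF(1) x0(1) assms(2)]) (use p(2) UF(3) x0 in auto)
  then have sq: "1/3 \<le> (cmod (herm q p))^2" using x0 by simp
  have le1: "cmod (herm q w) \<le> 1" if "w \<in> Mt" for w
    using herm_le1[OF assms(2)] MS that by blast
  have lb: "1 / sqrt 3 \<le> cmod (herm q p)"
  proof -
    have "sqrt (1/3) \<le> sqrt ((cmod (herm q p))^2)" using sq by (rule real_sqrt_le_mono)
    then show ?thesis by (simp add: real_sqrt_divide)
  qed
  have bdd: "bdd_below ((\<lambda>w. fs_dist q w) ` Mt)"
  proof (rule bdd_belowI)
    fix z assume "z \<in> (\<lambda>w. fs_dist q w) ` Mt"
    then obtain w where w: "w \<in> Mt" "z = fs_dist q w" by blast
    show "0 \<le> z" unfolding w fs_dist_def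
      by (rule arccos_lbound) (use le1[OF w(1)] norm_ge_zero[of "herm q w"] in linarith)+
  qed
  have "fs_setdist q Mt \<le> fs_dist q p"
    unfolding fs_setdist_def by (rule cINF_lower[OF bdd p(1)])
  also have "\<dots> \<le> arccos (1 / sqrt 3)"
    unfolding fs_dist_def
  proof (rule arccos_le_arccos)
    have "0 \<le> 1 / sqrt (3::real)" by simp
    then show "- 1 \<le> 1 / sqrt (3::real)" by linarith
  qed (use lb le1[OF p(1)] in auto)
  finally show ?thesis .
qed


end
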